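(* Let $i,m,n\in\mathbb{N}_0$ with $m<n+i$, and let \[ \mathcal{F}_{i,m,n}=\{p(x)+x^i\ln(x)q(x):\ p\in\Pi_m,\ q\in\Pi_n\}, \] considered as functions on $(1,\infty)$. Then every nonzero $f\in\mathcal{F}_{i,m,n}$ has at most $2n+i$ distinct zeros in $(1,\infty)$. In particular, if $m=n+i-1$, every nonzero $f\in\mathcal{F}_{i,m,n}$ has fewer than $m+n+2$ distinct zeros in $(1,\infty)$.
   Context: $\Pi_n$ denotes the space of real polynomials of degree at most $n$. *)

theory Defs
  imports Complex_Main "HOL-Computational_Algebra.Polynomial"
begin

definition Ffun :: "nat \<Rightarrow> real poly \<Rightarrow> real poly \<Rightarrow> real \<Rightarrow> real" where
  "Ffun i p q x = poly p x + x ^ i * ln x * poly q x"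

end

theory Submission
  imports Defs
begin

definition good :: "nat \<Rightarrow> (real \<Rightarrow> real) \<Rightarrow> bool" where
  "good N g \<longleftrightarrow> (\<forall>x>1. g x = 0) \<or>
     (\<forall>S. S \<subseteq> {x. x > 1 \<and> g x = 0} \<longrightarrow> finite S \<longrightarrow> card S \<le> N)"

lemma rolle_sets:
  fixes g g' :: "real \<Rightarrow> real"
  assumes der: "\<And>x. x > 1 \<Longrightarrow> (g has_real_derivative g' x) (at x)"
  shows "\<forall>S. finite S \<longrightarrow> card S = Suc n \<longrightarrow> S \<subseteq> {x. x > 1 \<and> g x = 0} \<longrightarrow>
     (\<exists>T. finite T \<and> T \<subseteq> {x. x > 1 \<and> g' x = 0} \<and> card T = n \<and>
          (\<forall>t\<in>T. Min S < t \<and> t < Max S))"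
proof (induction n)
  case 0
  show ?case by (intro allI impI, rule exI[of _ "{}"]) auto
next
  case (Suc n)
  show ?case
  proof (intro allI impI)
    fix S :: "real set"
    assume fS: "finite S" and cS: "card S = Suc (Suc n)" and SZ: "S \<subseteq> {x. x > 1 \<and> g x = 0}"
    have Sne: "S \<noteq> {}" using cS by auto
    define M where "M = Max S"
    have MS: "M \<in> S" using fS Sne M_def by auto
    define S' where "S' = S - {M}"
    have fS': "finite S'" using fS S'_def by auto
    have cS': "card S' = Suc n" using cS MS fS S'_def by auto
    have S'ne: "S' \<noteq> {}" using cS' by auto
    have S'Z: "S' \<subseteq> {x. x > 1 \<and> g x = 0}" using SZ S'_def by auto
    obtain T' where T': "finite T'" "T' \<subseteq> {x. x > 1 \<and> g' x = 0}" "card T' = n"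
       "\<forall>t\<in>T'. Min S' < t \<and> t < Max S'"
      using Suc.IH fS' cS' S'Z by blast
    define M' where "M' = Max S'"
    have M'S': "M' \<in> S'" using fS' S'ne M'_def by auto
    have M'lt: "M' < M"
    proof -
      have "M' \<in> S" "M' \<noteq> M" using M'S' S'_def by auto
      moreover have "M' \<le> M" using \<open>M' \<in> S\<close> fS M_def by auto
      ultimately show ?thesis by auto
    qed
    have gM: "g M = 0" "M > 1" using MS SZ by auto
    have gM': "g M' = 0" "M' > 1" using M'S' S'Z by auto
    obtain z where z: "M' < z" "z < M" "g M - g M' = (M - M') * g' z"
      using MVT2[OF M'lt, of g g'] der gM' by force
    have gz: "g' z = 0" using z gM gM' M'lt by simp
    have minle: "Min S \<le> Min S'" using fS S'ne S'_def by (intro Min_antimono) auto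
    have minM': "Min S' \<le> M'" using fS' M'S' by auto
    define T where "T = insert z T'"
    have zT': "z \<notin> T'" using T'(4) z M'_def by force
    show "\<exists>T. finite T \<and> T \<subseteq> {x. x > 1 \<and> g' x = 0} \<and> card T = Suc n \<and>
          (\<forall>t\<in>T. Min S < t \<and> t < Max S)"
    proof (rule exI[of _ T], intro conjI)
      show "finite T" using T' T_def by auto
      show "T \<subseteq> {x. x > 1 \<and> g' x = 0}" using T' T_def gz z gM' by auto
      show "card T = Suc n" using T' T_def zT' by auto
      show "\<forall>t\<in>T. Min S < t \<and> t < Max S"
        using T'(4) T_def z minle minM' M_def M'_def M'lt by force
    qed
  qed
qed

lemma good_step:
  fixes g g' :: "real \<Rightarrow> real"
  assumes der: "\<And>x. x > 1 \<Longrightarrow> (g has_real_derivative g' x) (at x)"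
    and gd: "good N g'"
  shows "good (Suc N) g"
proof (cases "\<forall>x>1. g' x = 0")
  case True
  show ?thesis
  proof (cases "\<exists>x0>1. g x0 = 0")
    case True2: True
    then obtain x0 where x0: "x0 > 1" "g x0 = 0" by auto
    have "\<forall>x>1. g x = 0"
    proof (intro allI impI)
      fix x :: real assume x: "x > 1"
      show "g x = 0"
      proof (cases x0 x rule: linorder_cases)
        case less
        then obtain z where "x0 < z" "z < x" "g x - g x0 = (x - x0) * g' z"
          using MVT2[OF less, of g g'] der x0 by force
        then show ?thesis using True x0 by auto
      next
        case equal then show ?thesis using x0 by simp
      next
        case greater
        then obtain z where "x < z" "z < x0" "g x0 - g x = (x0 - x) * g' z"
          using MVT2[OF greater, of g g'] der x by force
        then show ?thesis using True x0 x by auto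
      qed
    qed
    then show ?thesis unfolding good_def by blast
  next
    case False
    then have E: "{x. x > 1 \<and> g x = 0} = {}" by auto
    have "\<forall>S. S \<subseteq> {x. x > 1 \<and> g x = 0} \<longrightarrow> finite S \<longrightarrow> card S \<le> Suc N"
      unfolding E by auto
    then show ?thesis unfolding good_def by blast
  qed
next
  case False
  then have bd: "\<forall>S. S \<subseteq> {x. x > 1 \<and> g' x = 0} \<longrightarrow> finite S \<longrightarrow> card S \<le> N"
    using gd unfolding good_def by blast
  have "\<forall>S. S \<subseteq> {x. x > 1 \<and> g x = 0} \<longrightarrow> finite S \<longrightarrow> card S \<le> Suc N"
  proof (intro allI impI)
    fix S assume SZ: "S \<subseteq> {x. x > 1 \<and> g x = 0}" and fS: "finite S"
    show "card S \<le> Suc N"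
    proof (cases "card S")
      case 0 then show ?thesis by simp
    next
      case (Suc k)
      then obtain T where "finite T" "T \<subseteq> {x. x > 1 \<and> g' x = 0}" "card T = k"
        using rolle_sets[OF der, of k] fS SZ by blast
      then show ?thesis using bd Suc by fastforce
    qed
  qed
  then show ?thesis unfolding good_def by blast
qed

lemma good_mult:
  assumes "\<And>x. x > 1 \<Longrightarrow> h x = w x * g x \<and> w x \<noteq> 0"
    and "good N g"
  shows "good N h"
proof -
  have "{x. x > 1 \<and> h x = 0} = {x. x > 1 \<and> g x = 0}" using assms(1) by auto
  moreover have "(\<forall>x>1. h x = 0) = (\<forall>x>1. g x = 0)" using assms(1) by auto
  ultimately show ?thesis using assms(2) unfolding good_def by simp
qed

fun sstep :: "nat \<Rightarrow> nat \<Rightarrow> real \<times> real \<Rightarrow> real \<times> real" where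
  "sstep k d (u, v) = ((real d - real k) * u + v, (real d - real k) * v)"

primrec srun :: "nat \<Rightarrow> nat \<Rightarrow> nat \<Rightarrow> real \<times> real \<Rightarrow> real \<times> real" where
  "srun k0 0 d uv = uv"
| "srun k0 (Suc j) d uv = srun (Suc k0) j d (sstep k0 d uv)"

definition Ef :: "nat \<Rightarrow> nat \<Rightarrow> (nat \<Rightarrow> real \<times> real) \<Rightarrow> real \<Rightarrow> real" where
  "Ef D k c x = (\<Sum>d\<le>D. (fst (c d) + ln x * snd (c d)) * x powr (real d - real k))"

lemma Ef_deriv:
  assumes x: "x > 0"
  shows "(Ef D k c has_real_derivative Ef D (Suc k) (\<lambda>d. sstep k d (c d)) x) (at x)"
proof -
  have "((\<lambda>x. Ef D k c x) has_real_derivative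
     (\<Sum>d\<le>D. (fst (sstep k d (c d)) + ln x * snd (sstep k d (c d))) * x powr (real d - real (Suc k)))) (at x)"
    unfolding Ef_def
  proof (rule DERIV_sum)
    fix d assume "d \<in> {..D}"
    obtain u v where c: "c d = (u, v)" by force
    have e2: "x powr (real d - real k - 1) = x powr (real d - real k) / x"
      using x by (simp add: powr_diff)
    have e: "x powr (real d - real (Suc k)) = x powr (real d - real k) / x"
      using e2 by (simp add: algebra_simps)
    have "((\<lambda>x. (fst (c d) + ln x * snd (c d)) * x powr (real d - real k)) has_real_derivative
       (0 + (inverse x * v + ln x * 0)) * x powr (real d - real k) +
       (u + ln x * v) * ((real d - real k) * x powr (real d - real k - 1))) (at x)"
      unfolding c using x
      by (auto intro!: derivative_eq_intros simp: field_simps inverse_eq_divide)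
    moreover have "(0 + (inverse x * v + ln x * 0)) * x powr (real d - real k) +
       (u + ln x * v) * ((real d - real k) * x powr (real d - real k - 1))
       = (fst (sstep k d (c d)) + ln x * snd (sstep k d (c d))) * x powr (real d - real (Suc k))"
    proof -
      show ?thesis unfolding c e e2 using x by (simp add: field_simps inverse_eq_divide)
    qed
    ultimately show "((\<lambda>x. (fst (c d) + ln x * snd (c d)) * x powr (real d - real k)) has_real_derivative
       (fst (sstep k d (c d)) + ln x * snd (sstep k d (c d))) * x powr (real d - real (Suc k))) (at x)"
      by simp
  qed
  then show ?thesis unfolding Ef_def by simp
qed

lemma chain:
  "good N (Ef D (k0 + j) (\<lambda>d. srun k0 j d (c d))) \<Longrightarrow> good (N + j) (Ef D k0 c)"
proof (induction j arbitrary: k0 c N)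
  case 0 then show ?case by simp
next
  case (Suc j)
  have "good (N + j) (Ef D (Suc k0) (\<lambda>d. sstep k0 d (c d)))"
    by (rule Suc.IH) (use Suc.prems in simp)
  then have "good (Suc (N + j)) (Ef D k0 c)"
    by (rule good_step[rotated]) (simp add: Ef_deriv)
  then show ?case by simp
qed

lemma srun_zero: "srun k0 j d (0, 0) = (0, 0)"
  by (induction j arbitrary: k0) auto

lemma srun_snd0: "snd (srun k0 j d (u, 0)) = 0"
  by (induction j arbitrary: k0 u) auto

lemma srun_kill: "k0 \<le> d \<Longrightarrow> d < k0 + j \<Longrightarrow> srun k0 j d (u, 0) = (0, 0)"
proof (induction j arbitrary: k0 u)
  case 0 then show ?case by simp
next
  case (Suc j)
  show ?case
  proof (cases "k0 = d")
    case True then show ?thesis by (simp add: srun_zero)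
  next
    case False
    then show ?thesis using Suc by simp
  qed
qed

lemma srun_snd: "k0 \<le> d \<Longrightarrow> d < k0 + j \<Longrightarrow> snd (srun k0 j d (u, v)) = 0"
proof (induction j arbitrary: k0 u v)
  case 0 then show ?case by simp
next
  case (Suc j)
  show ?case
  proof (cases "k0 = d")
    case True then show ?thesis by (simp add: srun_snd0)
  next
    case False
    then show ?thesis using Suc by simp
  qed
qed

lemma srun_pos: "k0 + j \<le> d \<Longrightarrow> s0 \<ge> 0 \<Longrightarrow> t0 > 0 \<Longrightarrow>
   \<exists>s t. s \<ge> 0 \<and> t > 0 \<and> srun k0 j d (\<beta> * s0, \<beta> * t0) = (\<beta> * s, \<beta> * t)"
proof (induction j arbitrary: k0 s0 t0)
  case 0 then show ?case by auto
next
  case (Suc j)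
  have l: "real d - real k0 > 0" using Suc.prems by simp
  have "sstep k0 d (\<beta> * s0, \<beta> * t0) =
     (\<beta> * ((real d - real k0) * s0 + t0), \<beta> * ((real d - real k0) * t0))"
    by (simp add: algebra_simps)
  moreover have "(real d - real k0) * s0 + t0 \<ge> 0" "(real d - real k0) * t0 > 0"
    using l Suc.prems by auto
  ultimately obtain s t where st: "s \<ge> 0" "t > 0"
    "srun (Suc k0) j d (\<beta> * ((real d - real k0) * s0 + t0), \<beta> * ((real d - real k0) * t0)) = (\<beta> * s, \<beta> * t)"
    using Suc.IH[of "Suc k0" "(real d - real k0) * s0 + t0" "(real d - real k0) * t0"] Suc.prems by auto
  have "srun k0 (Suc j) d (\<beta> * s0, \<beta> * t0) = (\<beta> * s, \<beta> * t)"
    using st(3) \<open>sstep k0 d (\<beta> * s0, \<beta> * t0) = _\<close> by (simp only: srun.simps)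
  then show ?case using st by blast
qed

lemma poly_sum_le:
  fixes r :: "real poly"
  assumes "degree r \<le> D"
  shows "poly r x = (\<Sum>d\<le>D. coeff r d * x ^ d)"
proof -
  have "poly r x = (\<Sum>d\<le>degree r. coeff r d * x ^ d)" by (simp add: poly_altdef)
  also have "\<dots> = (\<Sum>d\<le>D. coeff r d * x ^ d)"
    using assms by (intro sum.mono_neutral_left) (auto simp: coeff_eq_0)
  finally show ?thesis .
qed

theorem mainTheorem9:
  fixes i m n :: nat and p q :: "real poly"
  assumes "m < n + i"
    and "degree p \<le> m" and "degree q \<le> n"
    and "\<exists>x>1. Ffun i p q x \<noteq> 0"
  shows "finite {x. x > 1 \<and> Ffun i p q x = 0}
         \<and> card {x. x > 1 \<and> Ffun i p q x = 0} \<le> 2 * n + i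
         \<and> (m = n + i - 1 \<longrightarrow> card {x. x > 1 \<and> Ffun i p q x = 0} < m + n + 2)"
proof -
  define D where "D = n + i"
  define r where "r = monom 1 i * q"
  have degr: "degree r \<le> D"
    unfolding r_def D_def using assms(3)
    by (metis add.commute add_le_mono1 degree_monom_le degree_mult_le order_trans)
  have degp: "degree p \<le> D" using assms(1,2) D_def by simp
  define c0 where "c0 = (\<lambda>d. (coeff p d, coeff r d))"
  have fE: "Ffun i p q x = Ef D 0 c0 x" if x: "x > 1" for x
  proof -
    have "Ffun i p q x = poly p x + ln x * poly r x"
      unfolding Ffun_def r_def by (simp add: poly_monom)
    also have "\<dots> = (\<Sum>d\<le>D. coeff p d * x ^ d) + ln x * (\<Sum>d\<le>D. coeff r d * x ^ d)"
      using poly_sum_le[OF degp] poly_sum_le[OF degr] by simp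
    also have "\<dots> = Ef D 0 c0 x"
      unfolding Ef_def c0_def using x
      by (simp add: sum_distrib_left sum.distrib[symmetric] powr_realpow algebra_simps)
    finally show ?thesis .
  qed
  define c1 where "c1 = (\<lambda>d. srun 0 D d (c0 d))"
  define c2 where "c2 = (\<lambda>d. srun i n d (c1 d))"
  define \<beta> where "\<beta> = coeff q n"
  have c2low: "c2 d = (0, 0)" if "d < D" for d
  proof (cases "d < i")
    case True
    have "coeff r d = 0" unfolding r_def using True by (simp add: coeff_monom_mult)
    then have "c1 d = (0, 0)" unfolding c1_def c0_def using srun_kill[of 0 d D] that by simp
    then show ?thesis unfolding c2_def by (simp add: srun_zero)
  next
    case False
    have "snd (c1 d) = 0" unfolding c1_def using srun_snd[of 0 d D "fst (c0 d)" "snd (c0 d)"] that by simp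
    then have "c1 d = (fst (c1 d), 0)" by (metis prod.collapse)
    then show ?thesis unfolding c2_def using srun_kill[of i d n "fst (c1 d)"] False that D_def
      by (metis add.commute not_less)
  qed
  have c0D: "c0 D = (\<beta> * 0, \<beta> * 1)"
  proof -
    have "coeff p D = 0" using assms(1,2) D_def by (simp add: coeff_eq_0)
    moreover have "coeff r D = \<beta>" unfolding r_def \<beta>_def D_def by (simp add: coeff_monom_mult)
    ultimately show ?thesis unfolding c0_def by simp
  qed
  obtain s1 t1 where st1: "s1 \<ge> 0" "t1 > 0" "c1 D = (\<beta> * s1, \<beta> * t1)"
    using srun_pos[of 0 D D 0 1 \<beta>] c0D unfolding c1_def by auto
  obtain s2 t2 where st2: "s2 \<ge> 0" "t2 > 0" "c2 D = (\<beta> * s2, \<beta> * t2)"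
    using srun_pos[of i n D s1 t1 \<beta>] st1 D_def unfolding c2_def by auto
  have Efin: "Ef D (i + n) c2 x = \<beta> * (s2 + ln x * t2)" if x: "x > 1" for x
  proof -
    have "Ef D (i + n) c2 x = (\<Sum>d\<in>{D}. (fst (c2 d) + ln x * snd (c2 d)) * x powr (real d - real (i + n)))"
      unfolding Ef_def using c2low by (intro sum.mono_neutral_right) auto
    then show ?thesis using st2 D_def x by (simp add: algebra_simps)
  qed
  have g0: "good 0 (Ef D (i + n) c2)"
  proof (cases "\<beta> = 0")
    case True then show ?thesis unfolding good_def using Efin by simp
  next
    case False
    have "{x. x > 1 \<and> Ef D (i + n) c2 x = 0} = {}"
    proof -
      have "s2 + ln x * t2 > 0" if "x > 1" for x
        using st2 that by (simp add: add_nonneg_pos)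
      then show ?thesis using Efin False by (metis (mono_tags, lifting) empty_Collect_eq less_irrefl mult_eq_0_iff)
    qed
    then show ?thesis unfolding good_def by auto
  qed
  have g1: "good n (Ef D i c1)"
    using chain[of 0 D "i" n c1] g0 unfolding c2_def by simp
  have g1': "good n (Ef D (0 + D) c1)"
  proof (rule good_mult[OF _ g1])
    fix x :: real assume x: "x > 1"
    have "Ef D i c1 x = x powr real n * Ef D (0 + D) c1 x"
      unfolding Ef_def sum_distrib_left
      by (intro sum.cong refl) (simp add: D_def powr_add[symmetric] algebra_simps)
    then show "Ef D (0 + D) c1 x = x powr (- real n) * Ef D i c1 x \<and> x powr (- real n) \<noteq> 0"
      using x by (simp add: powr_minus field_simps)
  qed
  have g: "good (n + D) (Ef D 0 c0)"
    using chain[of n D 0 D c0] g1' unfolding c1_def by simp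
  have nD: "n + D = 2 * n + i" by (simp add: D_def)
  have gf: "good (2 * n + i) (Ffun i p q)"
  proof -
    have "good (n + D) (Ffun i p q)"
    proof (rule good_mult[OF _ g])
      fix x :: real assume x1: "x > 1"
      show "Ffun i p q x = 1 * Ef D 0 c0 x \<and> (1::real) \<noteq> 0"
        by (rule conjI, simp only: mult_1_left, rule fE, rule x1, simp)
    qed
    then show ?thesis using nD by simp
  qed
  have bd: "\<forall>S. S \<subseteq> {x. x > 1 \<and> Ffun i p q x = 0} \<longrightarrow> finite S \<longrightarrow> card S \<le> 2 * n + i"
    using gf assms(4) unfolding good_def by auto
  have fin: "finite {x. x > 1 \<and> Ffun i p q x = 0}"
  proof (rule ccontr)
    assume "\<not> ?thesis"
    then obtain B where B: "finite B" "card B = Suc (2 * n + i)" "B \<subseteq> {x. x > 1 \<and> Ffun i p q x = 0}"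
      using infinite_arbitrarily_large by blast
    have "card B \<le> 2 * n + i" using bd B(1,3) by blast
    then show False using B(2) by simp
  qed
  have cd: "card {x. x > 1 \<and> Ffun i p q x = 0} \<le> 2 * n + i" using bd fin by simp
  show ?thesis using fin cd by auto
qed

end
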